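(* Let $G=G_1\otimes G_2$, where $G_1$ and $G_2$ are arbitrary vertex-disjoint graphs, and let $I_s,I_t$ be independent sets of $G$. Then the length of a shortest reconfiguration sequence from $I_s$ to $I_t$ is at most $2$.
   Context: All graphs are finite, simple, undirected, with nonempty vertex sets. The join of vertex-disjoint graphs $G_1=(V_1,E_1)$, $G_2=(V_2,E_2)$ is $G_1\otimes G_2=(V_1\cup V_2,\,E_1\cup E_2\cup\{v_1v_2: v_1\in V_1,v_2\in V_2\})$. A reconfiguration sequence from $I_s$ to $I_t$ of length $\ell$ is a sequence $\langle I_s=I_0,\dots,I_\ell=I_t\rangle$ of independent sets of $G$ such that the induced subgraph $G[I_{i-1}\triangle I_i]$ is connected for every $i\in\{1,\dots,\ell\}$. *)

theory Defs
  imports Main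
begin

definition is_graph :: "'a set \<Rightarrow> 'a set set \<Rightarrow> bool" where
  "is_graph V E \<longleftrightarrow> finite V \<and> V \<noteq> {} \<and>
     (\<forall>e\<in>E. \<exists>u v. e = {u, v} \<and> u \<noteq> v \<and> u \<in> V \<and> v \<in> V)"

definition join_V :: "'a set \<Rightarrow> 'a set \<Rightarrow> 'a set" where
  "join_V V1 V2 = V1 \<union> V2"

definition join_E :: "'a set \<Rightarrow> 'a set set \<Rightarrow> 'a set \<Rightarrow> 'a set set \<Rightarrow> 'a set set" where
  "join_E V1 E1 V2 E2 = E1 \<union> E2 \<union> {{v1, v2} | v1 v2. v1 \<in> V1 \<and> v2 \<in> V2}"

definition independent :: "'a set \<Rightarrow> 'a set set \<Rightarrow> 'a set \<Rightarrow> bool" where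
  "independent V E I \<longleftrightarrow> I \<subseteq> V \<and> (\<forall>u\<in>I. \<forall>v\<in>I. {u, v} \<notin> E)"

definition induced_connected :: "'a set set \<Rightarrow> 'a set \<Rightarrow> bool" where
  "induced_connected E S \<longleftrightarrow> S \<noteq> {} \<and>
     (\<forall>u\<in>S. \<forall>v\<in>S. (\<lambda>x y. x \<in> S \<and> y \<in> S \<and> {x, y} \<in> E)\<^sup>*\<^sup>* u v)"

definition symdiff :: "'a set \<Rightarrow> 'a set \<Rightarrow> 'a set" where
  "symdiff A B = (A - B) \<union> (B - A)"

definition reconf_seq :: "'a set \<Rightarrow> 'a set set \<Rightarrow> 'a set list \<Rightarrow> 'a set \<Rightarrow> 'a set \<Rightarrow> bool" where
  "reconf_seq V E Is Ss St \<longleftrightarrow> Is \<noteq> [] \<and> hd Is = Ss \<and> last Is = St \<and>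
     (\<forall>I\<in>set Is. independent V E I) \<and>
     (\<forall>i. Suc i < length Is \<longrightarrow> induced_connected E (symdiff (Is ! i) (Is ! Suc i)))"

definition seq_length :: "'a set list \<Rightarrow> nat" where
  "seq_length Is = length Is - 1"

end

theory Submission
  imports Defs
begin

lemma cross_edge:
  assumes "x \<in> V1" "y \<in> V2"
  shows "{x, y} \<in> join_E V1 E1 V2 E2" "{y, x} \<in> join_E V1 E1 V2 E2"
  using assms unfolding join_E_def by (auto simp: insert_commute)

lemma indep_side:
  assumes "independent (join_V V1 V2) (join_E V1 E1 V2 E2) I"
  shows "I \<subseteq> V1 \<or> I \<subseteq> V2"
proof (rule ccontr)
  assume "\<not> (I \<subseteq> V1 \<or> I \<subseteq> V2)"
  then obtain u v where "u \<in> I" "u \<notin> V1" "v \<in> I" "v \<notin> V2" by blast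
  moreover have "I \<subseteq> V1 \<union> V2" using assms unfolding independent_def join_V_def by blast
  ultimately have "u \<in> V2" "v \<in> V1" "u \<in> I" "v \<in> I" by auto
  then show False using assms cross_edge[of v V1 u V2 E1 E2] unfolding independent_def by blast
qed

lemma conn:
  assumes "A \<subseteq> V1" "B \<subseteq> V2" "A \<noteq> {}" "B \<noteq> {}"
  shows "induced_connected (join_E V1 E1 V2 E2) (A \<union> B)"
proof -
  let ?S = "A \<union> B"
  define R where "R = (\<lambda>x y. x \<in> ?S \<and> y \<in> ?S \<and> {x, y} \<in> join_E V1 E1 V2 E2)"
  obtain a b where ab: "a \<in> A" "b \<in> B" using assms by blast
  have Rab: "R a b" "R b a" using ab assms cross_edge[of a V1 b V2 E1 E2] unfolding R_def by auto
  have to_a: "R\<^sup>*\<^sup>* x a" if "x \<in> ?S" for x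
  proof (cases "x \<in> A")
    case True
    have "R x b" using True ab assms cross_edge[of x V1 b V2 E1 E2] unfolding R_def by auto
    then show ?thesis using Rab(2) by (rule converse_rtranclp_into_rtranclp[OF _ r_into_rtranclp])
  next
    case False
    then have "x \<in> B" using that by blast
    then have "R x a" using ab assms cross_edge[of a V1 x V2 E1 E2] unfolding R_def by auto
    then show ?thesis by blast
  qed
  have from_a: "R\<^sup>*\<^sup>* a x" if "x \<in> ?S" for x
  proof (cases "x \<in> A")
    case True
    have "R b x" using True ab assms cross_edge[of x V1 b V2 E1 E2] unfolding R_def by auto
    with Rab(1) show ?thesis by (rule converse_rtranclp_into_rtranclp[OF _ r_into_rtranclp])
  next
    case False
    then have "x \<in> B" using that by blast
    then have "R a x" using ab assms cross_edge[of a V1 x V2 E1 E2] unfolding R_def by auto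
    then show ?thesis by blast
  qed
  have "\<forall>u\<in>?S. \<forall>v\<in>?S. R\<^sup>*\<^sup>* u v"
    using to_a from_a rtranclp_trans by metis
  moreover have "?S \<noteq> {}" using ab by blast
  ultimately show ?thesis unfolding induced_connected_def R_def by simp
qed

lemma symdiff_disj: "A \<inter> B = {} \<Longrightarrow> symdiff A B = A \<union> B"
  unfolding symdiff_def by blast

lemma conn_single:
  assumes "A \<subseteq> V1" "B \<subseteq> V2" "card B = 1 \<or> card A = 1"
    "A \<noteq> {} \<or> card B = 1" "B \<noteq> {} \<or> card A = 1"
  shows "induced_connected (join_E V1 E1 V2 E2) (A \<union> B)"
proof (cases "A = {} \<or> B = {}")
  case True
  then obtain w where "A \<union> B = {w}" using assms by (auto simp: card_Suc_eq)
  then show ?thesis unfolding induced_connected_def by auto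
next
  case False
  then show ?thesis using conn[OF assms(1,2)] by blast
qed

lemma indep_single:
  assumes "is_graph V1 E1" "is_graph V2 E2" "V1 \<inter> V2 = {}" "w \<in> V1 \<union> V2"
  shows "independent (join_V V1 V2) (join_E V1 E1 V2 E2) {w}"
proof -
  have "{w} \<notin> E1" using assms(1) unfolding is_graph_def by (metis doubleton_eq_iff insert_absorb2)
  moreover have "{w} \<notin> E2" using assms(2) unfolding is_graph_def by (metis doubleton_eq_iff insert_absorb2)
  moreover have "{w} \<noteq> {v1, v2}" if "v1 \<in> V1" "v2 \<in> V2" for v1 v2
    using assms(3) that by (metis disjoint_iff insertI1 insert_commute singletonD)
  ultimately have "{w, w} \<notin> join_E V1 E1 V2 E2" unfolding join_E_def by auto
  then show ?thesis using assms unfolding independent_def join_V_def by auto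
qed

theorem lemma25:
  fixes V1 V2 :: "'a set" and E1 E2 :: "'a set set" and Ss St :: "'a set"
  assumes "is_graph V1 E1" and "is_graph V2 E2" and "V1 \<inter> V2 = {}"
    and "independent (join_V V1 V2) (join_E V1 E1 V2 E2) Ss"
    and "independent (join_V V1 V2) (join_E V1 E1 V2 E2) St"
  shows "\<exists>Is. reconf_seq (join_V V1 V2) (join_E V1 E1 V2 E2) Is Ss St \<and> seq_length Is \<le> 2"
proof -
  let ?V = "join_V V1 V2" and ?E = "join_E V1 E1 V2 E2"
  obtain w1 where w1: "w1 \<in> V1" using assms(1) unfolding is_graph_def by blast
  obtain w2 where w2: "w2 \<in> V2" using assms(2) unfolding is_graph_def by blast
  have via: "\<exists>Is. reconf_seq ?V ?E Is Ss St \<and> seq_length Is \<le> 2"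
    if w: "w \<in> V1 \<union> V2" "w \<notin> Ss" "w \<notin> St" and cS: "induced_connected ?E (Ss \<union> {w})"
      and cT: "induced_connected ?E ({w} \<union> St)" for w
  proof -
    have iw: "independent ?V ?E {w}" using indep_single[OF assms(1-3) w(1)] .
    have "symdiff Ss {w} = Ss \<union> {w}" "symdiff {w} St = {w} \<union> St"
      using w unfolding symdiff_def by auto
    have "\<forall>i. Suc i < length [Ss, {w}, St] \<longrightarrow>
        induced_connected ?E (symdiff ([Ss, {w}, St] ! i) ([Ss, {w}, St] ! Suc i))"
    proof (intro allI impI)
      fix i assume "Suc i < length [Ss, {w}, St]"
      then have "i = 0 \<or> i = 1" by auto
      then show "induced_connected ?E (symdiff ([Ss, {w}, St] ! i) ([Ss, {w}, St] ! Suc i))"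
        using cS cT \<open>symdiff Ss {w} = Ss \<union> {w}\<close> \<open>symdiff {w} St = {w} \<union> St\<close> by auto
    qed
    then show ?thesis using iw assms(4,5)
      by (intro exI[of _ "[Ss, {w}, St]"]) (auto simp: reconf_seq_def seq_length_def)
  qed
  have direct: "\<exists>Is. reconf_seq ?V ?E Is Ss St \<and> seq_length Is \<le> 2"
    if "induced_connected ?E (symdiff Ss St)"
  proof -
    have "\<forall>i. Suc i < length [Ss, St] \<longrightarrow>
        induced_connected ?E (symdiff ([Ss, St] ! i) ([Ss, St] ! Suc i))"
      using that by simp
    then show ?thesis using assms(4,5)
      by (intro exI[of _ "[Ss, St]"]) (auto simp: reconf_seq_def seq_length_def)
  qed
  have sS: "Ss \<subseteq> V1 \<or> Ss \<subseteq> V2" and sT: "St \<subseteq> V1 \<or> St \<subseteq> V2"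
    using indep_side assms(4,5) by blast+
  show ?thesis
  proof (cases "Ss \<subseteq> V1 \<and> St \<subseteq> V1")
    case True
    have "w2 \<notin> V1" using w2 assms(3) by blast
    moreover have "induced_connected ?E (Ss \<union> {w2})" "induced_connected ?E ({w2} \<union> St)"
      using conn_single[of Ss V1 "{w2}" V2 E1 E2] conn_single[of St V1 "{w2}" V2 E1 E2] True w2
      by (auto simp: Un_commute)
    ultimately show ?thesis using True w2 by (intro via[of w2]) auto
  next
    case F1: False
    show ?thesis
    proof (cases "Ss \<subseteq> V2 \<and> St \<subseteq> V2")
      case True
      have "w1 \<notin> V2" using w1 assms(3) by blast
      moreover have "induced_connected ?E (Ss \<union> {w1})" "induced_connected ?E ({w1} \<union> St)"
        using conn_single[of "{w1}" V1 Ss V2 E1 E2] conn_single[of "{w1}" V1 St V2 E1 E2] True w1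
        by (auto simp: Un_commute)
      ultimately show ?thesis using True w1 by (intro via[of w1]) auto
    next
      case False
      then have "(Ss \<subseteq> V1 \<and> St \<subseteq> V2 \<and> Ss \<noteq> {} \<and> St \<noteq> {}) \<or>
                 (Ss \<subseteq> V2 \<and> St \<subseteq> V1 \<and> Ss \<noteq> {} \<and> St \<noteq> {})"
        using F1 sS sT by blast
      moreover have "Ss \<inter> St = {}" if "Ss \<subseteq> V1 \<and> St \<subseteq> V2 \<or> Ss \<subseteq> V2 \<and> St \<subseteq> V1"
        using that assms(3) by blast
      ultimately have "induced_connected ?E (symdiff Ss St)"
      proof (elim disjE conjE)
        assume h: "Ss \<subseteq> V1" "St \<subseteq> V2" "Ss \<noteq> {}" "St \<noteq> {}" and
          d: "Ss \<subseteq> V1 \<and> St \<subseteq> V2 \<or> Ss \<subseteq> V2 \<and> St \<subseteq> V1 \<Longrightarrow> Ss \<inter> St = {}"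
        show ?thesis using conn[OF h, of E1 E2] d h by (simp add: symdiff_disj)
      next
        assume h: "Ss \<subseteq> V2" "St \<subseteq> V1" "Ss \<noteq> {}" "St \<noteq> {}" and
          d: "Ss \<subseteq> V1 \<and> St \<subseteq> V2 \<or> Ss \<subseteq> V2 \<and> St \<subseteq> V1 \<Longrightarrow> Ss \<inter> St = {}"
        show ?thesis using conn[of St V1 Ss V2 E1 E2] d h by (simp add: symdiff_disj Un_commute)
      qed
      then show ?thesis by (rule direct)
    qed
  qed
qed

end
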